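(* Let $C$ be a cycle of goods, $N$ a regular set of $n$ agents, $t\ge2$ an integer, and $N_1,\dots,N_t$ pairwise disjoint subsets of $N$ with $\bigcup_{i=1}^t N_i=N$, $|N_1|\ge|N_2|\ge\dots\ge|N_t|$, such that for each $i$ all agents in $N_i$ are of the same type. Let $c_t=\frac{t}{2t-2}$. Suppose $N_1,N_2\neq\emptyset$ and there are $n$-splits $\Pi_1,\Pi_2$ of $C$ such that $\Pi_i$ is $c_t$-strong for the agents in $N_i$ ($i=1,2$), and there is a bundle $A\in\Pi_1$ and a bundle $B\in\Pi_2$ such that $A\cap B$ has value at least $c_t$ to some agent in $N$. Then there exists a $c_t$-strong allocation of the goods of $C$ to the agents in $N$.
   Context: A cycle of goods has goods $v_1,\dots,v_m$ with edges $v_iv_{i+1}$ and $v_mv_1$. A utility function assigns a non-negative real to each good, extended additively to sets. A bundle is a set of goods inducing a connected subgraph (empty allowed); an $n$-split is a sequence of $n$ pairwise disjoint bundles (possibly empty) with union all goods. $\mathrm{mms}^{(n)}(C,u)=\max_{P_1,\dots,P_n}\min_i u(P_i)$ over all $n$-splits. Agents are of the same type if they have the same utility function. An agent with utility $u$ is $n$-regular if $\mathrm{mms}^{(n)}(C,u)=u(\text{all goods})/n=1$; a set of $n$ agents is regular if every agent in it is $n$-regular. A split is $q$-strong for an agent if each of its bundles has value at least $q$ to that agent. An allocation (an $n$-split with the $i$-th bundle assigned to agent $i$) is $q$-strong if every agent receives a bundle of value at least $q$ to her. *)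

theory Defs
  imports Complex_Main
begin

(* Cycle of goods with m goods, represented as 0,...,m-1, edges i -- (i+1) mod m.
  A bundle is a set of goods inducing a connected subgraph (the empty set allowed):
  exactly the empty set and the arcs of the cycle. *)

definition is_bundle :: "nat \<Rightarrow> nat set \<Rightarrow> bool" where
  "is_bundle m B \<longleftrightarrow> B = {} \<or>
     (\<exists>s k. s < m \<and> k \<le> m \<and> B = {(s + j) mod m | j. j < k})"

definition val :: "(nat \<Rightarrow> real) \<Rightarrow> nat set \<Rightarrow> real" where
  "val u S = (\<Sum>g\<in>S. u g)"

definition is_split :: "nat \<Rightarrow> nat \<Rightarrow> (nat \<Rightarrow> nat set) \<Rightarrow> bool" where
  "is_split m n P \<longleftrightarrow> (\<forall>i<n. is_bundle m (P i)) \<and>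
     (\<forall>i<n. \<forall>j<n. i \<noteq> j \<longrightarrow> P i \<inter> P j = {}) \<and>
     (\<Union>i<n. P i) = {..<m}"

definition mms :: "nat \<Rightarrow> nat \<Rightarrow> (nat \<Rightarrow> real) \<Rightarrow> real" where
  "mms m n u = Max {Min ((\<lambda>i. val u (P i)) ` {..<n}) | P. is_split m n P}"

definition n_regular :: "nat \<Rightarrow> nat \<Rightarrow> (nat \<Rightarrow> real) \<Rightarrow> bool" where
  "n_regular m n u \<longleftrightarrow> mms m n u = val u {..<m} / real n \<and> val u {..<m} / real n = 1"

definition strong_for :: "nat \<Rightarrow> real \<Rightarrow> (nat \<Rightarrow> real) \<Rightarrow> (nat \<Rightarrow> nat set) \<Rightarrow> bool" where
  "strong_for n q u P \<longleftrightarrow> (\<forall>i<n. val u (P i) \<ge> q)"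

definition strong_alloc :: "nat \<Rightarrow> nat \<Rightarrow> real \<Rightarrow> (nat \<Rightarrow> nat \<Rightarrow> real) \<Rightarrow> (nat \<Rightarrow> nat set) \<Rightarrow> bool" where
  "strong_alloc m n q U P \<longleftrightarrow> is_split m n P \<and> (\<forall>i<n. val (U i) (P i) \<ge> q)"

end

theory Submission
  imports Defs
begin


definition S :: "(nat \<Rightarrow> real) \<Rightarrow> nat \<Rightarrow> nat \<Rightarrow> real" where
  "S w l r = (\<Sum>p\<in>{l..<r}. w p)"

fun hasK :: "(nat \<Rightarrow> real) \<Rightarrow> real \<Rightarrow> nat \<Rightarrow> nat \<Rightarrow> nat \<Rightarrow> bool" where
  "hasK w c 0 lo hi = (lo \<le> hi)"
| "hasK w c (Suc k) lo hi = (\<exists>x. lo \<le> x \<and> c \<le> S w lo x \<and> hasK w c k x hi)"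

lemma S_split: "l \<le> x \<Longrightarrow> x \<le> r \<Longrightarrow> S w l r = S w l x + S w x r"
  unfolding S_def by (metis sum.atLeastLessThan_concat)

lemma S_nonneg: "(\<And>p. l \<le> p \<Longrightarrow> p < r \<Longrightarrow> w p \<ge> 0) \<Longrightarrow> S w l r \<ge> 0"
  unfolding S_def by (intro sum_nonneg) auto

lemma S_mono_r: "(\<And>p. l \<le> p \<Longrightarrow> p < r' \<Longrightarrow> w p \<ge> 0) \<Longrightarrow> l \<le> r \<Longrightarrow> r \<le> r' \<Longrightarrow> S w l r \<le> S w l r'"
  using S_split[of l r r' w] S_nonneg[of r r' w] by auto

lemma S_mono_l: "(\<And>p. l \<le> p \<Longrightarrow> p < r \<Longrightarrow> w p \<ge> 0) \<Longrightarrow> l \<le> l' \<Longrightarrow> l' \<le> r \<Longrightarrow> S w l' r \<le> S w l r"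
  using S_split[of l l' r w] S_nonneg[of l l' w] by auto

lemma S_empty[simp]: "S w l l = 0" unfolding S_def by simp

lemma S_last: "l < r \<Longrightarrow> S w l r = S w l (r - 1) + w (r - 1)"
proof -
  assume "l < r"
  then obtain r' where "r = Suc r'" "l \<le> r'" by (cases r) auto
  then show ?thesis unfolding S_def by simp
qed

lemma hasK_le: "hasK w c k lo hi \<Longrightarrow> lo \<le> hi"
proof (induction k arbitrary: lo)
  case (Suc k) then show ?case by (meson hasK.simps(2) order_trans)
qed auto

lemma hasK_mono_lo:
  assumes "hasK w c k x' hi" "x \<le> x'" "\<And>p. x \<le> p \<Longrightarrow> p < hi \<Longrightarrow> w p \<ge> 0"
  shows "hasK w c k x hi"
proof (cases k)
  case 0 then show ?thesis using assms by auto
next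
  case (Suc k')
  then obtain y where y: "x' \<le> y" "c \<le> S w x' y" "hasK w c k' y hi" using assms by auto
  have "y \<le> hi" using hasK_le[OF y(3)] .
  have "S w x' y \<le> S w x y" by (rule S_mono_l) (use assms y \<open>y \<le> hi\<close> in auto)
  then have "x \<le> y" "c \<le> S w x y" using y assms by auto
  then show ?thesis using Suc y(3) by auto
qed

lemma hasK_S:
  assumes "hasK w c (Suc k) lo hi" "\<And>p. lo \<le> p \<Longrightarrow> p < hi \<Longrightarrow> w p \<ge> 0"
  shows "c \<le> S w lo hi"
proof -
  obtain x where x: "lo \<le> x" "c \<le> S w lo x" "hasK w c k x hi" using assms by auto
  have "x \<le> hi" using hasK_le[OF x(3)] .
  have "S w lo x \<le> S w lo hi" by (rule S_mono_r) (use assms x \<open>x \<le> hi\<close> in auto)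
  then show ?thesis using x by auto
qed

lemma hasK_down: "hasK w c (Suc k) lo hi \<Longrightarrow> hasK w c k lo hi"
proof (induction k arbitrary: lo)
  case 0 then show ?case using hasK_le by fastforce
next
  case (Suc k) then show ?case by (meson hasK.simps(2))
qed

lemma hasK_down': "hasK w c k lo hi \<Longrightarrow> k' \<le> k \<Longrightarrow> hasK w c k' lo hi"
proof (induction k)
  case 0 then show ?case by auto
next
  case (Suc k) then show ?case using hasK_down le_Suc_eq by blast
qed

lemma hasK_cut:
  assumes "hasK w c (Suc k) lo hi" "lo \<le> x" "\<And>y. lo \<le> y \<Longrightarrow> y < x \<Longrightarrow> S w lo y < c"
    "\<And>p. lo \<le> p \<Longrightarrow> p < hi \<Longrightarrow> w p \<ge> 0"
  shows "hasK w c k x hi"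
proof -
  obtain y where y: "lo \<le> y" "c \<le> S w lo y" "hasK w c k y hi" using assms by auto
  have "x \<le> y" using assms(3)[of y] y by force
  show ?thesis by (rule hasK_mono_lo[OF y(3) \<open>x \<le> y\<close>]) (use assms in auto)
qed

lemma hasK_append:
  assumes "hasK w c k lo l" "l \<le> r" "r \<le> hi" "c \<le> S w l r"
    "\<And>p. lo \<le> p \<Longrightarrow> p < hi \<Longrightarrow> w p \<ge> 0"
  shows "hasK w c (Suc k) lo hi"
  using assms
proof (induction k arbitrary: lo)
  case 0
  have "S w l r \<le> S w lo r" by (rule S_mono_l) (use 0 in auto)
  then have "lo \<le> r" "c \<le> S w lo r" "hasK w c 0 r hi" using 0 by auto
  then show ?case by (meson hasK.simps(2))
next
  case (Suc k)
  then obtain x where x: "lo \<le> x" "c \<le> S w lo x" "hasK w c k x l" by auto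
  have "hasK w c (Suc k) x hi" by (rule Suc.IH) (use Suc x in auto)
  then show ?case using x by auto
qed




definition alloc_ok where
  "alloc_ok M c w lo hi I \<longleftrightarrow> (\<forall>a\<in>M. lo \<le> fst (I a) \<and> fst (I a) \<le> snd (I a) \<and> snd (I a) \<le> hi \<and> c \<le> S (w a) (fst (I a)) (snd (I a)))
      \<and> (\<forall>a\<in>M. \<forall>b\<in>M. a \<noteq> b \<longrightarrow> {fst (I a)..<snd (I a)} \<inter> {fst (I b)..<snd (I b)} = {})
      \<and> (\<Union>a\<in>M. {fst (I a)..<snd (I a)}) = {lo..<hi}"

lemma knife:
  assumes "finite M" "card M = Suc k"
    "M = Gd \<union> Bd" "Gd \<inter> Bd = {}" "c > 0"
    "\<forall>a\<in>M. \<forall>p. lo \<le> p \<and> p < hi \<longrightarrow> w a p \<ge> 0"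
    "\<forall>g\<in>Gd. hasK (w g) c (card M) lo hi"
    "\<forall>b\<in>Bd. (\<forall>p. lo \<le> p \<and> p < hi \<longrightarrow> w b p < c) \<and> c * (2 * real (card Bd) + real (card Gd) - 1) \<le> S (w b) lo hi"
    "lo \<le> hi"
  shows "\<exists>I. alloc_ok M c w lo hi I"
  using assms
proof (induction k arbitrary: M Gd Bd lo)
  case 0
  then have "card M = 1" using 0(2) by simp
  then obtain a where Ma: "M = {a}" by (rule card_1_singletonE)
  have "c \<le> S (w a) lo hi"
  proof (cases "a \<in> Gd")
    case True
    then show ?thesis using 0 Ma hasK_S[of "w a" c 0 lo hi] by auto
  next
    case False
    then have "a \<in> Bd" "Bd = {a}" "Gd = {}" using 0 Ma by auto
    then show ?thesis using 0 by auto
  qed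
  then have "alloc_ok M c w lo hi (\<lambda>_. (lo, hi))" unfolding alloc_ok_def using Ma 0 by auto
  then show ?case by blast
next
  case (Suc k)
  note nn = Suc.prems(6)
  obtain a0 where a0: "a0 \<in> M" using Suc.prems(2) by (metis card.empty ex_in_conv nat.simps(3))
  have "c \<le> S (w a0) lo hi"
  proof (cases "a0 \<in> Gd")
    case True
    then show ?thesis using Suc.prems hasK_S[of "w a0" c "Suc k" lo hi] by auto
  next
    case False
    then have b: "a0 \<in> Bd" using a0 Suc.prems by auto
    moreover have "finite Bd" using Suc.prems(1,3) by auto
    ultimately have "card Bd \<ge> 1" by (metis One_nat_def Suc_leI card_gt_0_iff empty_iff)
    then have "c \<le> c * (2 * real (card Bd) + real (card Gd) - 1)" using Suc.prems(5) by auto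
    then show ?thesis using Suc.prems(8) b by fastforce
  qed
  define R where "R = {y. lo \<le> y \<and> y \<le> hi \<and> (\<exists>a\<in>M. c \<le> S (w a) lo y)}"
  have hiR: "hi \<in> R" unfolding R_def using a0 \<open>c \<le> S (w a0) lo hi\<close> Suc.prems(9) by auto
  define x where "x = (LEAST y. y \<in> R)"
  have xR: "x \<in> R" unfolding x_def using hiR by (rule LeastI)
  have below: "S (w a) lo y < c" if "a \<in> M" "lo \<le> y" "y < x" for a y
  proof (rule ccontr)
    assume "\<not> S (w a) lo y < c"
    then have "c \<le> S (w a) lo y" by simp
    then have "y \<in> R" unfolding R_def using that xR unfolding R_def by auto
    then show False using that(3) unfolding x_def using not_less_Least by blast
  qed
  have xlo: "lo \<le> x" "x \<le> hi" using xR unfolding R_def by auto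
  have "x \<noteq> lo" using xR Suc.prems(5) unfolding R_def by auto
  then have xlo': "lo < x" using xlo by auto
  obtain e where e: "e \<in> M" "c \<le> S (w e) lo x" "e \<notin> Bd \<Longrightarrow> \<forall>b\<in>Bd. S (w b) lo x < c"
  proof (cases "\<exists>b\<in>Bd. c \<le> S (w b) lo x")
    case True
    then obtain b where "b \<in> Bd" "c \<le> S (w b) lo x" by blast
    then show ?thesis using that Suc.prems(3) by blast
  next
    case False
    obtain a where "a \<in> M" "c \<le> S (w a) lo x" using xR unfolding R_def by auto
    then show ?thesis using that False by force
  qed
  define M' where "M' = M - {e}"
  define Gd' where "Gd' = Gd - {e}"
  define Bd' where "Bd' = Bd - {e}"
  have cM': "card M' = Suc k" using Suc.prems(2) e(1) Suc.prems(1) unfolding M'_def by auto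
  have fM': "finite M'" using Suc.prems(1) unfolding M'_def by auto
  have fG: "finite Gd" "finite Bd" using Suc.prems(1,3) by auto
  have IHc: "\<exists>I. alloc_ok M' c w x hi I"
  proof (rule Suc.IH[OF fM' cM', of Gd' Bd'])
    show "M' = Gd' \<union> Bd'" using Suc.prems(3) unfolding M'_def Gd'_def Bd'_def by auto
    show "Gd' \<inter> Bd' = {}" using Suc.prems(4) unfolding Gd'_def Bd'_def by auto
    show "0 < c" by fact
    show "\<forall>a\<in>M'. \<forall>p. x \<le> p \<and> p < hi \<longrightarrow> 0 \<le> w a p" using nn xlo unfolding M'_def by auto
    show "x \<le> hi" by fact
    show "\<forall>g\<in>Gd'. hasK (w g) c (card M') x hi"
    proof
      fix g assume g: "g \<in> Gd'"
      then have gM: "g \<in> M" using Suc.prems(3) unfolding Gd'_def by auto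
      have "hasK (w g) c (Suc (card M')) lo hi" using Suc.prems(7) g Suc.prems(2) cM' unfolding Gd'_def by auto
      then show "hasK (w g) c (card M') x hi"
        by (rule hasK_cut) (use xlo below[OF gM] nn gM in auto)
    qed
    show "\<forall>b\<in>Bd'. (\<forall>p. x \<le> p \<and> p < hi \<longrightarrow> w b p < c) \<and>
        c * (2 * real (card Bd') + real (card Gd') - 1) \<le> S (w b) x hi"
    proof
      fix b assume b: "b \<in> Bd'"
      then have bB: "b \<in> Bd" "b \<in> M" "b \<noteq> e" using Suc.prems(3) unfolding Bd'_def by auto
      have sing: "\<forall>p. lo \<le> p \<and> p < hi \<longrightarrow> w b p < c" and tot: "c * (2 * real (card Bd) + real (card Gd) - 1) \<le> S (w b) lo hi"
        using Suc.prems(8) bB by auto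
      have spl: "S (w b) lo hi = S (w b) lo x + S (w b) x hi" using S_split xlo by blast
      have "c * (2 * real (card Bd') + real (card Gd') - 1) \<le> S (w b) x hi"
      proof (cases "e \<in> Bd")
        case True
        then have "e \<notin> Gd" using Suc.prems(4) by auto
        have "card Bd > 0" using True fG card_gt_0_iff by blast
        then have cc: "card Gd' = card Gd" "real (card Bd') = real (card Bd) - 1"
          unfolding Gd'_def Bd'_def using True fG \<open>e \<notin> Gd\<close> by (auto simp: of_nat_diff)
        have "S (w b) lo x = S (w b) lo (x - 1) + w b (x - 1)" using S_last xlo' by blast
        moreover have "S (w b) lo (x - 1) < c" using below[OF bB(2)] xlo' by auto
        moreover have "lo \<le> x - 1" "x - 1 < hi" using xlo' xlo by auto
        then have "w b (x - 1) < c" using sing by blast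
        ultimately have "S (w b) lo x < 2 * c" by auto
        moreover have "c * (2 * real (card Bd') + real (card Gd') - 1) = c * (2 * real (card Bd) + real (card Gd) - 1) - 2 * c"
          unfolding cc by (simp add: algebra_simps)
        ultimately show ?thesis using tot spl by linarith
      next
        case False
        then have "e \<in> Gd" using e(1) Suc.prems(3) by auto
        have "card Gd > 0" using \<open>e \<in> Gd\<close> fG card_gt_0_iff by blast
        then have cc: "card Bd' = card Bd" "real (card Gd') = real (card Gd) - 1"
          unfolding Gd'_def Bd'_def using False fG \<open>e \<in> Gd\<close> by (auto simp: of_nat_diff)
        have "S (w b) lo x < c" using e(3) False bB by auto
        moreover have "c * (2 * real (card Bd') + real (card Gd') - 1) = c * (2 * real (card Bd) + real (card Gd) - 1) - c"
          unfolding cc by (simp add: algebra_simps)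
        ultimately show ?thesis using tot spl by linarith
      qed
      then show "(\<forall>p. x \<le> p \<and> p < hi \<longrightarrow> w b p < c) \<and>
        c * (2 * real (card Bd') + real (card Gd') - 1) \<le> S (w b) x hi" using sing xlo by auto
    qed
  qed
  then obtain I' where I': "alloc_ok M' c w x hi I'" by blast
  define I where "I = I'(e := (lo, x))"
  have "alloc_ok M c w lo hi I"
    unfolding alloc_ok_def
  proof (intro conjI)
    have I'1: "\<forall>a\<in>M'. x \<le> fst (I' a) \<and> fst (I' a) \<le> snd (I' a) \<and> snd (I' a) \<le> hi \<and> c \<le> S (w a) (fst (I' a)) (snd (I' a))"
      and I'2: "\<forall>a\<in>M'. \<forall>b\<in>M'. a \<noteq> b \<longrightarrow> {fst (I' a)..<snd (I' a)} \<inter> {fst (I' b)..<snd (I' b)} = {}"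
      using I' unfolding alloc_ok_def by blast+
    show "\<forall>a\<in>M. lo \<le> fst (I a) \<and> fst (I a) \<le> snd (I a) \<and> snd (I a) \<le> hi \<and> c \<le> S (w a) (fst (I a)) (snd (I a))"
    proof
      fix a assume a: "a \<in> M"
      show "lo \<le> fst (I a) \<and> fst (I a) \<le> snd (I a) \<and> snd (I a) \<le> hi \<and> c \<le> S (w a) (fst (I a)) (snd (I a))"
      proof (cases "a = e")
        case True then show ?thesis using e xlo unfolding I_def by simp
      next
        case False
        then have "a \<in> M'" "I a = I' a" using a unfolding M'_def I_def by auto
        then show ?thesis using I'1 xlo by fastforce
      qed
    qed
    show "\<forall>a\<in>M. \<forall>b\<in>M. a \<noteq> b \<longrightarrow> {fst (I a)..<snd (I a)} \<inter> {fst (I b)..<snd (I b)} = {}"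
    proof (intro ballI impI)
      fix a b assume ab: "a \<in> M" "b \<in> M" "a \<noteq> b"
      show "{fst (I a)..<snd (I a)} \<inter> {fst (I b)..<snd (I b)} = {}"
      proof (cases "a = e")
        case True
        then have "b \<in> M'" "I b = I' b" "I a = (lo, x)" using ab unfolding M'_def I_def by auto
        then show ?thesis using I'1 by fastforce
      next
        case False
        note aF = False
        show ?thesis
        proof (cases "b = e")
          case True
          then have "a \<in> M'" "I a = I' a" "I b = (lo, x)" using ab aF unfolding M'_def I_def by auto
          then show ?thesis using I'1 by fastforce
        next
          case False
          then have "a \<in> M'" "I a = I' a" "b \<in> M'" "I b = I' b" using ab aF unfolding M'_def I_def by auto
          then show ?thesis using I'2 ab(3) by metis
        qed
      qed
    qed
    have "(\<Union>a\<in>M. {fst (I a)..<snd (I a)}) = {lo..<x} \<union> (\<Union>a\<in>M'. {fst (I' a)..<snd (I' a)})"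
      unfolding I_def M'_def using e(1) by (auto split: if_splits)
    also have "\<dots> = {lo..<hi}" using I' xlo unfolding alloc_ok_def by auto
    finally show "(\<Union>a\<in>M. {fst (I a)..<snd (I a)}) = {lo..<hi}" .
  qed
  then show ?case by blast
qed




definition rot :: "nat \<Rightarrow> nat \<Rightarrow> nat \<Rightarrow> nat" where "rot m s p = (s + p) mod m"

lemma rot_inj_aux:
  assumes "p \<le> q" "q < m" "(s + p) mod m = (s + q) mod (m::nat)"
  shows "p = q"
proof -
  have "s + q \<ge> s + p" using assms by simp
  then have "m dvd (s + q) - (s + p)" using assms(3) mod_eq_dvd_iff_nat[of "s + p" "s + q" m] by metis
  moreover have "(s + q) - (s + p) = q - p" by simp
  ultimately have "m dvd q - p" by metis
  moreover have "q - p < m" using assms by simp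
  ultimately have "q - p = 0" using nat_dvd_not_less by blast
  then show ?thesis using assms by simp
qed

lemma rot_inj: "inj_on (rot m s) {..<m}"
proof (rule inj_onI)
  fix p q assume pq: "p \<in> {..<m}" "q \<in> {..<m}" "rot m s p = rot m s q"
  then have e: "(s + p) mod m = (s + q) mod m" unfolding rot_def by simp
  show "p = q"
  proof (cases "p \<le> q")
    case True then show ?thesis using rot_inj_aux[OF True _ e] pq by simp
  next
    case False then show ?thesis using rot_inj_aux[of q p m s] e pq by simp
  qed
qed

lemma rot_lt: "m > 0 \<Longrightarrow> rot m s p < m" unfolding rot_def by simp

lemma rot_surj: "m > 0 \<Longrightarrow> rot m s ` {..<m} = {..<m}"
proof -
  assume m: "m > 0"
  have "rot m s ` {..<m} \<subseteq> {..<m}" using rot_lt[OF m] by auto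
  moreover have "card (rot m s ` {..<m}) = card {..<m}" using card_image[OF rot_inj] by simp
  ultimately show ?thesis by (simp add: card_subset_eq)
qed

lemma rot_shift: "rot m ((s + b) mod m) p = rot m s (b + p)"
  unfolding rot_def by (simp add: mod_add_left_eq add.assoc)

lemma val_rot:
  assumes "r \<le> m"
  shows "val u (rot m s ` {l..<r}) = S (\<lambda>p. u (rot m s p)) l r"
proof -
  have "inj_on (rot m s) {l..<r}" by (rule inj_on_subset[OF rot_inj]) (use assms in auto)
  then show ?thesis unfolding val_def S_def by (simp add: sum.reindex)
qed

lemma bundle_rot:
  assumes "m > 0" "r \<le> m"
  shows "is_bundle m (rot m s ` {l..<r})"
proof (cases "l < r")
  case False then show ?thesis unfolding is_bundle_def by auto
next
  case True
  have "rot m s ` {l..<r} = {((s + l) mod m + j) mod m | j. j < r - l}"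
  proof (intro set_eqI iffI)
    fix x assume "x \<in> rot m s ` {l..<r}"
    then obtain p where p: "l \<le> p" "p < r" "x = (s + p) mod m" unfolding rot_def by auto
    have "s + p = (s + l) + (p - l)" using p by simp
    then have "x = ((s + l) mod m + (p - l)) mod m" using p(3) by (metis mod_add_left_eq)
    moreover have "p - l < r - l" using p by auto
    ultimately show "x \<in> {((s + l) mod m + j) mod m | j. j < r - l}" by blast
  next
    fix x assume "x \<in> {((s + l) mod m + j) mod m | j. j < r - l}"
    then obtain j where j: "j < r - l" "x = ((s + l) mod m + j) mod m" by auto
    then have "x = rot m s (l + j)" unfolding rot_def by (simp add: mod_add_left_eq add.assoc)
    then show "x \<in> rot m s ` {l..<r}" using j by auto
  qed
  moreover have "(s + l) mod m < m" using assms by simp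
  moreover have "r - l \<le> m" using assms by simp
  ultimately show ?thesis unfolding is_bundle_def by blast
qed

lemma arc_pos:
  assumes m: "m > 0" and s: "s < m" and len: "len < m"
    and Yb: "is_bundle m Y" and Yne: "Y \<noteq> {}"
    and disj: "Y \<inter> rot m s ` {len..<m} = {}"
  shows "\<exists>l r. l \<le> r \<and> r \<le> len \<and> Y = rot m s ` {l..<r}"
proof -
  obtain s' k where sk: "s' < m" "k \<le> m" "Y = {(s' + j) mod m | j. j < k}"
    using Yb Yne unfolding is_bundle_def by auto
  have k0: "k > 0" using Yne sk by (auto)
  define d where "d = (s' + m - s) mod m"
  have dm: "d < m" unfolding d_def using m by simp
  have key: "rot m s ((d + q) mod m) = (s' + q) mod m" for q
  proof -
    have "rot m s ((d + q) mod m) = (s + (d + q)) mod m" unfolding rot_def by (simp add: mod_add_right_eq)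
    also have "\<dots> = ((s + d) mod m + q) mod m" by (simp add: mod_add_left_eq add.assoc)
    also have "(s + d) mod m = (s + (s' + m - s)) mod m" unfolding d_def by (simp add: mod_add_right_eq)
    also have "s + (s' + m - s) = s' + m" using s by simp
    finally show ?thesis by (simp add: mod_add_left_eq)
  qed
  have inY: "(s' + q) mod m \<in> Y" if "q < k" for q using sk that by auto
  have dlen: "d < len"
  proof (rule ccontr)
    assume "\<not> d < len"
    then have "rot m s d \<in> rot m s ` {len..<m}" using dm by auto
    moreover have "rot m s d = (s' + 0) mod m" using key[of 0] dm by simp
    ultimately show False using inY[of 0] k0 disj by auto
  qed
  have dk: "d + k \<le> len"
  proof (rule ccontr)
    assume "\<not> d + k \<le> len"
    then have q: "len - d < k" using dlen by auto
    have "rot m s len \<in> rot m s ` {len..<m}" using len by auto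
    moreover have "rot m s len = (s' + (len - d)) mod m" using key[of "len - d"] dlen len by simp
    ultimately show False using inY[OF q] disj by auto
  qed
  have "Y = rot m s ` {d..<d + k}"
  proof (intro set_eqI iffI)
    fix x assume "x \<in> Y"
    then obtain j where j: "j < k" "x = (s' + j) mod m" using sk by auto
    then have "x = rot m s (d + j)" using key[of j] dk len by simp
    then show "x \<in> rot m s ` {d..<d + k}" using j by auto
  next
    fix x assume "x \<in> rot m s ` {d..<d + k}"
    then obtain p where p: "d \<le> p" "p < d + k" "x = rot m s p" by auto
    have "d + (p - d) = p" "p < m" using p dk len by auto
    then have "x = (s' + (p - d)) mod m" using key[of "p - d"] p(3) by simp
    moreover have "p - d < k" using p by auto
    ultimately show "x \<in> Y" using inY by blast
  qed
  then show ?thesis using dk by (intro exI[of _ d] exI[of _ "d + k"]) auto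
qed

lemma hasK_family:
  assumes "finite J" "c > 0" "lo \<le> hi"
    "\<And>p. lo \<le> p \<Longrightarrow> p < hi \<Longrightarrow> w p \<ge> 0"
    "\<forall>i\<in>J. lo \<le> l i \<and> l i \<le> r i \<and> r i \<le> hi \<and> c \<le> S w (l i) (r i)"
    "\<forall>i\<in>J. \<forall>j\<in>J. i \<noteq> j \<longrightarrow> {l i..<r i} \<inter> {l j..<r j} = {}"
  shows "hasK w c (card J) lo hi"
  using assms
proof (induction "card J" arbitrary: J hi)
  case 0 then show ?case by auto
next
  case (Suc k)
  then have "J \<noteq> {}" by auto
  define L where "L = Max (l ` J)"
  have "L \<in> l ` J" unfolding L_def using Suc.prems(1) \<open>J \<noteq> {}\<close> by simp
  then obtain j0 where j0: "j0 \<in> J" "l j0 = L" by auto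
  have Lmax: "l i \<le> L" if "i \<in> J" for i unfolding L_def using Suc.prems(1) that by simp
  have nonemp: "l i < r i" if "i \<in> J" for i
  proof (rule ccontr)
    assume "\<not> l i < r i"
    then have "S w (l i) (r i) = 0" unfolding S_def by simp
    then show False using Suc.prems(2,5) that by force
  qed
  have rL: "r i \<le> L" if "i \<in> J - {j0}" for i
  proof (rule ccontr)
    assume "\<not> r i \<le> L"
    then have "L \<in> {l i..<r i}" using Lmax that by auto
    moreover have "L \<in> {l j0..<r j0}" using j0 nonemp[OF j0(1)] by auto
    ultimately show False using Suc.prems(6) that j0 by blast
  qed
  have h: "hasK w c (card (J - {j0})) lo L"
  proof (rule Suc.hyps(1))
    show "k = card (J - {j0})" using Suc.hyps(2) j0 Suc.prems(1) by simp
    show "finite (J - {j0})" using Suc.prems(1) by simp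
    show "0 < c" by fact
    show "lo \<le> L" using Suc.prems(5) j0 by auto
    have "L \<le> hi" using Suc.prems(5) j0 by auto
    then show "\<And>p. lo \<le> p \<Longrightarrow> p < L \<Longrightarrow> 0 \<le> w p" using Suc.prems(4) by auto
    show "\<forall>i\<in>J - {j0}. lo \<le> l i \<and> l i \<le> r i \<and> r i \<le> L \<and> c \<le> S w (l i) (r i)"
      using Suc.prems(5) rL by blast
    show "\<forall>i\<in>J - {j0}. \<forall>j\<in>J - {j0}. i \<noteq> j \<longrightarrow> {l i..<r i} \<inter> {l j..<r j} = {}"
      using Suc.prems(6) by blast
  qed
  have "hasK w c (Suc (card (J - {j0}))) lo hi"
  proof (rule hasK_append[OF h, of "r j0" hi])
    show "L \<le> r j0" "r j0 \<le> hi" "c \<le> S w L (r j0)" using Suc.prems(5) j0 by auto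
    show "\<And>p. lo \<le> p \<Longrightarrow> p < hi \<Longrightarrow> 0 \<le> w p" by (rule Suc.prems(4))
  qed
  moreover have "card J > 0" using j0 Suc.prems(1) card_gt_0_iff by blast
  moreover have "Suc (card (J - {j0})) = card J" using j0 Suc.prems(1) \<open>card J > 0\<close> by simp
  ultimately show ?case by simp
qed




lemma val_empty[simp]: "val u {} = 0" unfolding val_def by simp

lemma rot_Int:
  assumes "A \<subseteq> {..<m}" "B \<subseteq> {..<m}"
  shows "rot m s ` A \<inter> rot m s ` B = rot m s ` (A \<inter> B)"
  using inj_on_image_Int[OF rot_inj assms] by simp

lemma assemble:
  fixes m n :: nat and U :: "nat \<Rightarrow> nat \<Rightarrow> real" and c :: real
  assumes m: "m > 0" and s: "s < m" and len: "len < m" and n2: "n \<ge> 2"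
    and D: "D = rot m s ` {len..<m}"
    and a0: "a0 < n" "c \<le> val (U a0) D"
    and c: "c > 0"
    and nonneg: "\<forall>a<n. \<forall>g<m. U a g \<ge> 0"
    and part: "{..<n} - {a0} = Gd \<union> Bd" "Gd \<inter> Bd = {}"
    and good: "\<forall>g\<in>Gd. \<exists>Q (J::nat set). finite J \<and> card J \<ge> n - 1 \<and>
        (\<forall>i\<in>J. is_bundle m (Q i) \<and> Q i \<inter> D = {} \<and> c \<le> val (U g) (Q i)) \<and>
        (\<forall>i\<in>J. \<forall>j\<in>J. i \<noteq> j \<longrightarrow> Q i \<inter> Q j = {})"
    and bad: "\<forall>b\<in>Bd. (\<forall>p<m. U b p < c) \<and>
        c * (2 * real (card Bd) + real (card Gd) - 1) \<le> val (U b) (rot m s ` {0..<len})"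
  shows "\<exists>P. strong_alloc m n c U P"
proof -
  define w where "w = (\<lambda>a p. U a (rot m s p))"
  define M where "M = {..<n} - {a0}"
  have cM: "card M = Suc (n - 2)" unfolding M_def using a0 n2 by simp
  have fM: "finite M" unfolding M_def by simp
  have MGB: "M = Gd \<union> Bd" unfolding M_def using part(1) .
  have wnn: "\<forall>a\<in>M. \<forall>p. 0 \<le> p \<and> p < len \<longrightarrow> w a p \<ge> 0"
    unfolding w_def M_def using nonneg rot_lt[OF m] by auto
  have Sval: "S (w a) l r = val (U a) (rot m s ` {l..<r})" if "r \<le> m" for a l r
    unfolding w_def using val_rot[OF that] by simp
  have hgood: "\<forall>g\<in>Gd. hasK (w g) c (card M) 0 len"
  proof
    fix g assume g: "g \<in> Gd"
    then have gM: "g \<in> M" using MGB by blast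
    have "\<exists>Q (J::nat set). finite J \<and> card J \<ge> n - 1 \<and>
        (\<forall>i\<in>J. is_bundle m (Q i) \<and> Q i \<inter> D = {} \<and> c \<le> val (U g) (Q i)) \<and>
        (\<forall>i\<in>J. \<forall>j\<in>J. i \<noteq> j \<longrightarrow> Q i \<inter> Q j = {})" using good g by (rule bspec)
    then obtain Q and J :: "nat set" where QJ0: "finite J \<and> card J \<ge> n - 1 \<and>
        (\<forall>i\<in>J. is_bundle m (Q i) \<and> Q i \<inter> D = {} \<and> c \<le> val (U g) (Q i)) \<and>
        (\<forall>i\<in>J. \<forall>j\<in>J. i \<noteq> j \<longrightarrow> Q i \<inter> Q j = {})" by iprover
    have QJ: "finite J" "card J \<ge> n - 1"
        "\<forall>i\<in>J. is_bundle m (Q i) \<and> Q i \<inter> D = {} \<and> c \<le> val (U g) (Q i)"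
        "\<forall>i\<in>J. \<forall>j\<in>J. i \<noteq> j \<longrightarrow> Q i \<inter> Q j = {}" using QJ0 by simp_all
    have "\<forall>i\<in>J. \<exists>l r. l \<le> r \<and> r \<le> len \<and> Q i = rot m s ` {l..<r}"
    proof
      fix i assume i: "i \<in> J"
      have "Q i \<noteq> {}" using QJ(3) i c by (metis val_empty not_le)
      then show "\<exists>l r. l \<le> r \<and> r \<le> len \<and> Q i = rot m s ` {l..<r}"
        using arc_pos[OF m s len, of "Q i"] QJ(3) i D by auto
    qed
    then obtain lf rf where lr: "\<forall>i\<in>J. lf i \<le> rf i \<and> rf i \<le> len \<and> Q i = rot m s ` {lf i..<rf i}"
      by metis
    have "hasK (w g) c (card J) 0 len"
    proof (rule hasK_family[OF QJ(1) c])
      show "0 \<le> len" by simp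
      show "\<And>p. 0 \<le> p \<Longrightarrow> p < len \<Longrightarrow> 0 \<le> w g p" using wnn gM by auto
      show "\<forall>i\<in>J. 0 \<le> lf i \<and> lf i \<le> rf i \<and> rf i \<le> len \<and> c \<le> S (w g) (lf i) (rf i)"
      proof
        fix i assume i: "i \<in> J"
        then have "S (w g) (lf i) (rf i) = val (U g) (Q i)" using lr Sval[of "rf i"] len by auto
        then show "0 \<le> lf i \<and> lf i \<le> rf i \<and> rf i \<le> len \<and> c \<le> S (w g) (lf i) (rf i)"
          using lr QJ(3) i by auto
      qed
      show "\<forall>i\<in>J. \<forall>j\<in>J. i \<noteq> j \<longrightarrow> {lf i..<rf i} \<inter> {lf j..<rf j} = {}"
      proof (intro ballI impI)
        fix i j assume ij: "i \<in> J" "j \<in> J" "i \<noteq> j"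
        show "{lf i..<rf i} \<inter> {lf j..<rf j} = {}"
        proof (rule ccontr)
          assume "{lf i..<rf i} \<inter> {lf j..<rf j} \<noteq> {}"
          then obtain p where "p \<in> {lf i..<rf i}" "p \<in> {lf j..<rf j}" by blast
          then have "rot m s p \<in> Q i \<inter> Q j" using lr ij by auto
          then show False using QJ(4) ij by auto
        qed
      qed
    qed
    then show "hasK (w g) c (card M) 0 len"
      by (rule hasK_down') (use QJ(2) cM n2 in auto)
  qed
  have hbad: "\<forall>b\<in>Bd. (\<forall>p. 0 \<le> p \<and> p < len \<longrightarrow> w b p < c) \<and>
      c * (2 * real (card Bd) + real (card Gd) - 1) \<le> S (w b) 0 len"
  proof
    fix b assume b: "b \<in> Bd"
    have "\<forall>p. 0 \<le> p \<and> p < len \<longrightarrow> w b p < c" using bad b rot_lt[OF m] unfolding w_def by auto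
    moreover have "S (w b) 0 len = val (U b) (rot m s ` {0..<len})" using Sval len by simp
    ultimately show "(\<forall>p. 0 \<le> p \<and> p < len \<longrightarrow> w b p < c) \<and>
      c * (2 * real (card Bd) + real (card Gd) - 1) \<le> S (w b) 0 len" using bad b by auto
  qed
  obtain I where I: "alloc_ok M c w 0 len I"
    using knife[OF fM cM MGB part(2) c wnn hgood hbad] by auto
  have I1: "\<forall>a\<in>M. fst (I a) \<le> snd (I a) \<and> snd (I a) \<le> len \<and> c \<le> S (w a) (fst (I a)) (snd (I a))"
    and I2: "\<forall>a\<in>M. \<forall>b\<in>M. a \<noteq> b \<longrightarrow> {fst (I a)..<snd (I a)} \<inter> {fst (I b)..<snd (I b)} = {}"
    and I3: "(\<Union>a\<in>M. {fst (I a)..<snd (I a)}) = {0..<len}"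
    using I unfolding alloc_ok_def by auto
  define P where "P = (\<lambda>a. if a = a0 then D else rot m s ` {fst (I a)..<snd (I a)})"
  have Pb: "is_bundle m (P i)" if "i < n" for i
  proof (cases "i = a0")
    case True then show ?thesis unfolding P_def D using bundle_rot[OF m, of m s len] by simp
  next
    case False
    then have "i \<in> M" using that unfolding M_def by auto
    then show ?thesis unfolding P_def using False bundle_rot[OF m, of "snd (I i)"] I1 len by auto
  qed
  have Pd: "P i \<inter> P j = {}" if "i < n" "j < n" "i \<noteq> j" for i j
  proof -
    have sub: "{fst (I a)..<snd (I a)} \<subseteq> {..<m}" if "a \<in> M" for a using I1 that len by fastforce
    show ?thesis
    proof (cases "i = a0")
      case True
      then have jM: "j \<in> M" using that unfolding M_def by auto
      have "P i \<inter> P j = rot m s ` {len..<m} \<inter> rot m s ` {fst (I j)..<snd (I j)}"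
        unfolding P_def using True that D by simp
      also have "\<dots> = rot m s ` ({len..<m} \<inter> {fst (I j)..<snd (I j)})"
        by (rule rot_Int) (use sub[OF jM] in auto)
      also have "{len..<m} \<inter> {fst (I j)..<snd (I j)} = {}" using I1 jM by auto
      finally show ?thesis by simp
    next
      case False
      note iF = False
      then have iM: "i \<in> M" using that unfolding M_def by auto
      show ?thesis
      proof (cases "j = a0")
        case True
        have "P i \<inter> P j = rot m s ` {fst (I i)..<snd (I i)} \<inter> rot m s ` {len..<m}"
          unfolding P_def using True iF that D by simp
        also have "\<dots> = rot m s ` ({fst (I i)..<snd (I i)} \<inter> {len..<m})"
          by (rule rot_Int) (use sub[OF iM] in auto)
        also have "{fst (I i)..<snd (I i)} \<inter> {len..<m} = {}" using I1 iM by auto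
        finally show ?thesis by simp
      next
        case False
        then have jM: "j \<in> M" using that unfolding M_def by auto
        have "P i \<inter> P j = rot m s ` {fst (I i)..<snd (I i)} \<inter> rot m s ` {fst (I j)..<snd (I j)}"
          unfolding P_def using False iF by simp
        also have "\<dots> = rot m s ` ({fst (I i)..<snd (I i)} \<inter> {fst (I j)..<snd (I j)})"
          by (rule rot_Int) (use sub[OF iM] sub[OF jM] in auto)
        also have "{fst (I i)..<snd (I i)} \<inter> {fst (I j)..<snd (I j)} = {}" using I2 iM jM that(3) by blast
        finally show ?thesis by simp
      qed
    qed
  qed
  have Pu: "(\<Union>i<n. P i) = {..<m}"
  proof -
    have "{..<n} = insert a0 M" unfolding M_def using a0 by auto
    then have "(\<Union>i<n. P i) = P a0 \<union> (\<Union>a\<in>M. P a)" by auto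
    also have "(\<Union>a\<in>M. P a) = rot m s ` (\<Union>a\<in>M. {fst (I a)..<snd (I a)})"
      unfolding P_def M_def by auto
    also have "\<dots> = rot m s ` {0..<len}" using I3 by simp
    also have "P a0 = rot m s ` {len..<m}" unfolding P_def D by simp
    also have "rot m s ` {len..<m} \<union> rot m s ` {0..<len} = rot m s ` ({len..<m} \<union> {0..<len})" by (rule image_Un[symmetric])
    also have "{len..<m} \<union> {0..<len} = {..<m}" using len by auto
    also have "rot m s ` {..<m} = {..<m}" using rot_surj[OF m] by simp
    finally show ?thesis .
  qed
  have Pv: "c \<le> val (U i) (P i)" if "i < n" for i
  proof (cases "i = a0")
    case True then show ?thesis unfolding P_def using a0 by simp
  next
    case False
    then have "i \<in> M" using that unfolding M_def by auto
    then show ?thesis unfolding P_def using False I1 Sval[of "snd (I i)" i "fst (I i)"] len by auto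
  qed
  have "strong_alloc m n c U P" unfolding strong_alloc_def is_split_def using Pb Pd Pu Pv by auto
  then show ?thesis by blast
qed




lemma rot_single:
  assumes "q < m"
  shows "rot m ((q + 1) mod m) ` {m - 1..<m} = {q}"
proof -
  have "{m - 1..<m} = {m - 1}" using assms by auto
  moreover have "rot m ((q + 1) mod m) (m - 1) = q"
    using rot_shift[of m q 1 "m - 1"] assms unfolding rot_def by simp
  ultimately show ?thesis by simp
qed

lemma rot_interval: "{(s' + j) mod m | j. j < k} = rot m s' ` {0..<k}"
  unfolding rot_def by auto

lemma rot_rerot:
  assumes "k \<le> m"
  shows "rot m ((s + (y + k)) mod m) ` {m - k..<m} = rot m s ` {y..<y + k}"
proof (intro set_eqI iffI)
  fix x assume "x \<in> rot m ((s + (y + k)) mod m) ` {m - k..<m}"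
  then obtain p where p: "m - k \<le> p" "p < m" "x = rot m ((s + (y + k)) mod m) p" by auto
  have "x = rot m s ((y + k) + p)" using p(3) rot_shift by simp
  also have "(y + k) + p = (y + (p - (m - k))) + m" using p assms by simp
  also have "rot m s \<dots> = rot m s (y + (p - (m - k)))" unfolding rot_def by (simp add: add.assoc[symmetric])
  finally have "x = rot m s (y + (p - (m - k)))" .
  moreover have "y + (p - (m - k)) \<in> {y..<y + k}" using p assms by auto
  ultimately show "x \<in> rot m s ` {y..<y + k}" by blast
next
  fix x assume "x \<in> rot m s ` {y..<y + k}"
  then obtain q where q: "y \<le> q" "q < y + k" "x = rot m s q" by auto
  define p where "p = m - k + (q - y)"
  have "rot m ((s + (y + k)) mod m) p = rot m s ((y + k) + p)" using rot_shift by simp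
  also have "(y + k) + p = q + m" unfolding p_def using q assms by simp
  also have "rot m s (q + m) = rot m s q" unfolding rot_def by (simp add: add.assoc[symmetric])
  finally have "x = rot m ((s + (y + k)) mod m) p" using q by simp
  moreover have "p \<in> {m - k..<m}" unfolding p_def using q assms by auto
  ultimately show "x \<in> rot m ((s + (y + k)) mod m) ` {m - k..<m}" by blast
qed

lemma mms_split:
  assumes n: "n \<ge> 1" and reg: "n_regular m n u"
  shows "\<exists>P. is_split m n P \<and> (\<forall>i<n. val u (P i) \<ge> 1)"
proof -
  define f where "f = (\<lambda>P. Min ((\<lambda>i. val u (P i)) ` {..<n}))"
  define V where "V = {f P | P. is_split m n P}"
  have mm: "mms m n u = Max V" unfolding mms_def V_def f_def by simp
  define g where "g = (\<lambda>xs. Min ((\<lambda>i. val u (xs ! i)) ` {..<n}))"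
  have "V \<subseteq> g ` {xs. set xs \<subseteq> Pow {..<m} \<and> length xs = n}"
  proof
    fix v assume "v \<in> V"
    then obtain P where P: "is_split m n P" "v = f P" unfolding V_def by auto
    have "P i \<subseteq> {..<m}" if "i < n" for i using P(1) that unfolding is_split_def by blast
    then have mP: "map P [0..<n] \<in> {xs. set xs \<subseteq> Pow {..<m} \<and> length xs = n}" by fastforce
    have "(\<lambda>i. val u (map P [0..<n] ! i)) ` {..<n} = (\<lambda>i. val u (P i)) ` {..<n}"
      by (rule image_cong[OF refl]) simp
    then have "g (map P [0..<n]) = f P" unfolding f_def g_def by simp
    then show "v \<in> g ` {xs. set xs \<subseteq> Pow {..<m} \<and> length xs = n}" using P(2) mP by (metis image_eqI)
  qed
  moreover have "finite {xs. set xs \<subseteq> Pow {..<m} \<and> length xs = n}"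
    by (rule finite_lists_length_eq) auto
  ultimately have fV: "finite V" using finite_surj by blast
  define P0 where "P0 = (\<lambda>i::nat. if i = 0 then {..<m} else ({}::nat set))"
  have "is_bundle m {..<m}"
  proof (cases "m = 0")
    case True then show ?thesis unfolding is_bundle_def by simp
  next
    case False
    have "{..<m} = {(0 + j) mod m | j. j < m}" by auto (metis add_0 mod_less)
    then show ?thesis unfolding is_bundle_def using False by blast
  qed
  then have "is_split m n P0" unfolding is_split_def P0_def is_bundle_def using n by auto
  then have "V \<noteq> {}" unfolding V_def by blast
  then have "Max V \<in> V" using fV by simp
  then obtain P where P: "is_split m n P" "f P = mms m n u" unfolding V_def mm by auto
  have "mms m n u = 1" using reg unfolding n_regular_def by simp
  have "val u (P i) \<ge> 1" if "i < n" for i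
  proof -
    have "f P \<le> val u (P i)" unfolding f_def using that by (intro Min_le) auto
    then show ?thesis using P \<open>mms m n u = 1\<close> by simp
  qed
  then show ?thesis using P by blast
qed

lemma count_types:
  fixes t :: nat and Ns :: "nat \<Rightarrow> nat set"
  assumes t2: "t \<ge> 2"
    and disj: "\<forall>i\<in>{1..t}. \<forall>j\<in>{1..t}. i \<noteq> j \<longrightarrow> Ns i \<inter> Ns j = {}"
    and cover: "(\<Union>i\<in>{1..t}. Ns i) = {..<n}"
    and sizes: "\<forall>i\<in>{1..<t}. card (Ns i) \<ge> card (Ns (Suc i))"
  shows "2 * n \<le> t * (card (Ns 1) + card (Ns 2))"
proof -
  have fin: "finite (Ns i)" if "i \<in> {1..t}" for i using cover that
    by (metis UN_upper finite_lessThan finite_subset)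
  have n: "n = (\<Sum>i\<in>{1..t}. card (Ns i))"
  proof -
    have "card (\<Union>i\<in>{1..t}. Ns i) = (\<Sum>i\<in>{1..t}. card (Ns i))"
      by (rule card_UN_disjoint) (use fin disj in auto)
    then show ?thesis using cover by simp
  qed
  have le2: "card (Ns i) \<le> card (Ns 2)" if "2 \<le> i" "i \<le> t" for i
    using that
  proof (induction i rule: dec_induct)
    case base then show ?case by simp
  next
    case (step i)
    then have "card (Ns (Suc i)) \<le> card (Ns i)" using sizes by auto
    then show ?case using step by simp
  qed
  have "(1::nat) \<in> {1..<t}" using t2 by auto
  then have c12: "card (Ns 2) \<le> card (Ns 1)" using sizes by (metis numeral_2_eq_2 One_nat_def)
  have "{1..t} = insert 1 {2..t}" using t2 by auto
  then have "(\<Sum>i\<in>{1..t}. card (Ns i)) = card (Ns 1) + (\<Sum>i\<in>{2..t}. card (Ns i))" by simp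
  also have "(\<Sum>i\<in>{2..t}. card (Ns i)) \<le> (\<Sum>i\<in>{2..t}. card (Ns 2))"
    by (rule sum_mono) (use le2 in auto)
  also have "\<dots> = (t - 1) * card (Ns 2)" by simp
  finally have nle: "n \<le> card (Ns 1) + (t - 1) * card (Ns 2)" using n by simp
  obtain t' where t': "t = t' + 2" using t2 by (metis add.commute le_Suc_ex)
  have "t' * card (Ns 2) \<le> t' * card (Ns 1)" using c12 by simp
  then have "2 * (card (Ns 1) + (t - 1) * card (Ns 2)) \<le> t * (card (Ns 1) + card (Ns 2))"
    unfolding t' by (simp add: algebra_simps)
  moreover have "2 * n \<le> 2 * (card (Ns 1) + (t - 1) * card (Ns 2))" using nle by simp
  ultimately show ?thesis by (rule le_trans[rotated])
qed




lemma split_sub: "is_split m n P \<Longrightarrow> i < n \<Longrightarrow> P i \<subseteq> {..<m}"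
  unfolding is_split_def by blast

lemma find_X:
  assumes m: "m > 0" and n2: "n \<ge> 2" and c: "c > 0"
    and split1: "is_split m n P1" and split2: "is_split m n P2"
    and ij: "i < n" "j < n" "a < n" "c \<le> val (U a) (P1 i \<inter> P2 j)"
    and b2: "b2 < n" "\<forall>jj<n. c \<le> val (U b2) (P2 jj)"
  shows "\<exists>s x1 x2 i1 j1 a1. s < m \<and> x2 \<le> m \<and> i1 < n \<and> j1 < n \<and> a1 < n \<and>
     rot m s ` {x1..<x2} \<subseteq> P1 i1 \<inter> P2 j1 \<and> c \<le> val (U a1) (rot m s ` {x1..<x2})"
proof -
  define A where "A = P1 i"
  define B where "B = P2 j"
  have ABne: "A \<inter> B \<noteq> {}" using ij c unfolding A_def B_def by (metis val_empty not_le)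
  have Asub: "A \<subseteq> {..<m}" and Bsub: "B \<subseteq> {..<m}"
    using split_sub[OF split1 ij(1)] split_sub[OF split2 ij(2)] unfolding A_def B_def by auto
  show ?thesis
  proof (cases "A \<union> B = {..<m}")
    case True
    define j' where "j' = (if j = 0 then 1 else (0::nat))"
    have j': "j' < n" "j' \<noteq> j" unfolding j'_def using n2 by auto
    have "P2 j' \<inter> B = {}" using split2 j' ij(2) unfolding is_split_def B_def by blast
    moreover have "P2 j' \<subseteq> {..<m}" using split_sub[OF split2 j'(1)] .
    ultimately have sub: "P2 j' \<subseteq> A" using True by blast
    have ne: "P2 j' \<noteq> {}" using b2 j' c by (metis val_empty not_le)
    have "is_bundle m (P2 j')" using split2 j' unfolding is_split_def by blast
    then obtain s' k where sk: "s' < m" "k \<le> m" "P2 j' = {(s' + jj) mod m | jj. jj < k}"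
      using ne unfolding is_bundle_def by blast
    then have eq: "P2 j' = rot m s' ` {0..<k}" using rot_interval by metis
    have "rot m s' ` {0..<k} \<subseteq> P1 i \<inter> P2 j'" using sub eq unfolding A_def by auto
    moreover have "c \<le> val (U b2) (rot m s' ` {0..<k})" using b2 j' eq by metis
    ultimately show ?thesis using sk j' ij b2 by blast
  next
    case False
    then obtain q where q: "q < m" "q \<notin> A" "q \<notin> B" using Asub Bsub by blast
    define s where "s = (q + 1) mod m"
    have sm: "s < m" unfolding s_def using m by simp
    have single: "rot m s ` {m - 1..<m} = {q}" unfolding s_def using rot_single[OF q(1)] .
    have lenm: "m - 1 < m" using m by simp
    have "\<exists>l r. l \<le> r \<and> r \<le> m - 1 \<and> A = rot m s ` {l..<r}"
      by (rule arc_pos[OF m sm lenm]) (use split1 ij ABne q single in \<open>auto simp: is_split_def A_def\<close>)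
    then obtain a1 a2 where a12: "a2 \<le> m - 1" "A = rot m s ` {a1..<a2}" by blast
    have "\<exists>l r. l \<le> r \<and> r \<le> m - 1 \<and> B = rot m s ` {l..<r}"
      by (rule arc_pos[OF m sm lenm]) (use split2 ij ABne q single in \<open>auto simp: is_split_def B_def\<close>)
    then obtain b1 b2' where b12: "b2' \<le> m - 1" "B = rot m s ` {b1..<b2'}" by blast
    have "A \<inter> B = rot m s ` ({a1..<a2} \<inter> {b1..<b2'})"
      unfolding a12(2) b12(2) by (rule rot_Int) (use a12 b12 m in auto)
    also have "{a1..<a2} \<inter> {b1..<b2'} = {max a1 b1..<min a2 b2'}" by auto
    finally have AB: "A \<inter> B = rot m s ` {max a1 b1..<min a2 b2'}" .
    have "min a2 b2' \<le> m" using a12 by auto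
    then show ?thesis using AB sm ij unfolding A_def B_def by (metis order_refl)
  qed
qed




theorem lemma4p6:
  fixes m n t :: nat and U :: "nat \<Rightarrow> nat \<Rightarrow> real"
    and Ns :: "nat \<Rightarrow> nat set" and P1 P2 :: "nat \<Rightarrow> nat set"
  assumes nonneg: "\<forall>a<n. \<forall>g<m. U a g \<ge> 0"
    and regular: "\<forall>a<n. n_regular m n (U a)"
    and t2: "t \<ge> 2"
    and disj: "\<forall>i\<in>{1..t}. \<forall>j\<in>{1..t}. i \<noteq> j \<longrightarrow> Ns i \<inter> Ns j = {}"
    and cover: "(\<Union>i\<in>{1..t}. Ns i) = {..<n}"
    and sizes: "\<forall>i\<in>{1..<t}. card (Ns i) \<ge> card (Ns (Suc i))"
    and types: "\<forall>i\<in>{1..t}. \<forall>a\<in>Ns i. \<forall>b\<in>Ns i. \<forall>g<m. U a g = U b g"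
    and ne1: "Ns 1 \<noteq> {}" and ne2: "Ns 2 \<noteq> {}"
    and split1: "is_split m n P1" and split2: "is_split m n P2"
    and strong1: "\<forall>a\<in>Ns 1. strong_for n (real t / (2 * real t - 2)) (U a) P1"
    and strong2: "\<forall>a\<in>Ns 2. strong_for n (real t / (2 * real t - 2)) (U a) P2"
    and AB: "\<exists>i<n. \<exists>j<n. \<exists>a<n. val (U a) (P1 i \<inter> P2 j) \<ge> real t / (2 * real t - 2)"
  shows "\<exists>P. strong_alloc m n (real t / (2 * real t - 2)) U P"
proof -
  define c where "c = real t / (2 * real t - 2)"
  have t2r: "real t \<ge> 2" using t2 by simp
  have den: "2 * real t - 2 > 0" using t2r by simp
  have c0: "c > 0" unfolding c_def using t2r by simp
  have c1: "c \<le> 1" unfolding c_def using t2r den by (simp add: pos_divide_le_eq)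
  have st1: "\<forall>a\<in>Ns 1. \<forall>ii<n. c \<le> val (U a) (P1 ii)" using strong1 unfolding strong_for_def c_def by blast
  have st2: "\<forall>a\<in>Ns 2. \<forall>ii<n. c \<le> val (U a) (P2 ii)" using strong2 unfolding strong_for_def c_def by blast
  have r1: "(1::nat) \<in> {1..t}" and r2: "(2::nat) \<in> {1..t}" using t2 by auto
  have N1sub: "Ns 1 \<subseteq> {..<n}" and N2sub: "Ns 2 \<subseteq> {..<n}" using cover r1 r2 by blast+
  have N12: "Ns 1 \<inter> Ns 2 = {}" using disj r1 r2 by auto
  obtain x1 x2 where x12: "x1 \<in> Ns 1" "x2 \<in> Ns 2" using ne1 ne2 by blast
  have n2: "n \<ge> 2"
  proof -
    have "x1 \<noteq> x2" using x12 N12 by blast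
    moreover have "x1 < n" "x2 < n" using x12 N1sub N2sub by auto
    ultimately show ?thesis by linarith
  qed
  obtain i j a where ija: "i < n" "j < n" "a < n" "c \<le> val (U a) (P1 i \<inter> P2 j)"
    using AB unfolding c_def by blast
  have m0: "m > 0"
  proof -
    have "P1 i \<inter> P2 j \<noteq> {}" using ija c0 by (metis val_empty not_le)
    then obtain x where "x \<in> P1 i" by blast
    then show ?thesis using split_sub[OF split1 ija(1)] by auto
  qed
  have tot: "val (U b) {..<m} = real n" if "b < n" for b
    using regular that n2 unfolding n_regular_def by auto
  have "\<exists>P. strong_alloc m n c U P"
  proof (cases "\<exists>a0<n. \<exists>g0<m. c \<le> U a0 g0")
    case True
    then obtain a0 g0 where ag: "a0 < n" "g0 < m" "c \<le> U a0 g0" by blast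
    define s where "s = (g0 + 1) mod m"
    have sm: "s < m" unfolding s_def using m0 by simp
    have D: "{g0} = rot m s ` {m - 1..<m}" unfolding s_def using rot_single[OF ag(2)] by simp
    show ?thesis
    proof (rule assemble[OF m0 sm _ n2 D ag(1) _ c0 nonneg, of "{..<n} - {a0}" "{}"])
      show "m - 1 < m" using m0 by simp
      show "c \<le> val (U a0) {g0}" using ag unfolding val_def by simp
      show "{..<n} - {a0} = ({..<n} - {a0}) \<union> {}" "({..<n} - {a0}) \<inter> {} = {}" by auto
      show "\<forall>b\<in>{}. (\<forall>p<m. U b p < c) \<and> c * (2 * real (card {}) + real (card ({..<n} - {a0})) - 1)
          \<le> val (U b) (rot m s ` {0..<m - 1})" by simp
      show "\<forall>g\<in>{..<n} - {a0}. \<exists>Q (J::nat set). finite J \<and> n - 1 \<le> card J \<and>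
          (\<forall>i\<in>J. is_bundle m (Q i) \<and> Q i \<inter> {g0} = {} \<and> c \<le> val (U g) (Q i)) \<and>
          (\<forall>i\<in>J. \<forall>j\<in>J. i \<noteq> j \<longrightarrow> Q i \<inter> Q j = {})"
      proof
        fix g assume g: "g \<in> {..<n} - {a0}"
        then have gn: "g < n" by simp
        obtain Sp where Sp: "is_split m n Sp" "\<forall>ii<n. val (U g) (Sp ii) \<ge> 1"
          using mms_split[of n m "U g"] regular gn n2 by auto
        define K where "K = {ii. ii < n \<and> g0 \<in> Sp ii}"
        define J where "J = {..<n} - K"
        have fK: "finite K" unfolding K_def by simp
        have "card K \<le> Suc 0"
        proof (subst card_le_Suc0_iff_eq[OF fK], intro ballI)
          fix x y assume "x \<in> K" "y \<in> K"
          then show "x = y" using Sp(1) unfolding K_def is_split_def by blast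
        qed
        moreover have "card J = n - card K" unfolding J_def K_def by (subst card_Diff_subset) auto
        ultimately have cJ: "n - 1 \<le> card J" by simp
        have "\<forall>ii\<in>J. is_bundle m (Sp ii) \<and> Sp ii \<inter> {g0} = {} \<and> c \<le> val (U g) (Sp ii)"
          using Sp c1 unfolding J_def K_def is_split_def by fastforce
        moreover have "\<forall>ii\<in>J. \<forall>jj\<in>J. ii \<noteq> jj \<longrightarrow> Sp ii \<inter> Sp jj = {}"
          using Sp(1) unfolding J_def is_split_def by blast
        moreover have "finite J" unfolding J_def by simp
        ultimately show "\<exists>Q (J::nat set). finite J \<and> n - 1 \<le> card J \<and>
          (\<forall>i\<in>J. is_bundle m (Q i) \<and> Q i \<inter> {g0} = {} \<and> c \<le> val (U g) (Q i)) \<and>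
          (\<forall>i\<in>J. \<forall>j\<in>J. i \<noteq> j \<longrightarrow> Q i \<inter> Q j = {})" using cJ by blast
      qed
    qed
  next
    case False
    then have small: "\<forall>a<n. \<forall>g<m. U a g < c" by (auto simp: not_le)
    have b2: "x2 < n" "\<forall>jj<n. c \<le> val (U x2) (P2 jj)" using x12 N2sub st2 by auto
    obtain s y1' y2' i1 j1 a1 where X: "s < m" "y2' \<le> m" "i1 < n" "j1 < n" "a1 < n"
      "rot m s ` {y1'..<y2'} \<subseteq> P1 i1 \<inter> P2 j1" "c \<le> val (U a1) (rot m s ` {y1'..<y2'})"
      using find_X[OF m0 n2 c0 split1 split2 ija b2] by (elim exE conjE) (rule that; assumption)
    define w where "w = (\<lambda>a p. U a (rot m s p))"
    have Sv: "S (w a) l r = val (U a) (rot m s ` {l..<r})" if "r \<le> m" for a l r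
      unfolding w_def using val_rot[OF that] by simp
    have xle: "y1' \<le> y2'"
    proof (rule ccontr)
      assume "\<not> y1' \<le> y2'"
      then have "{y1'..<y2'} = {}" by auto
      then show False using X(7) c0 by simp
    qed
    define Pk where "Pk = (\<lambda>k. \<exists>y. y1' \<le> y \<and> y + k \<le> y2' \<and> (\<exists>a<n. c \<le> S (w a) y (y + k)))"
    have "Pk (y2' - y1')" unfolding Pk_def using xle X(2,5,7) Sv[of y2' a1 y1'] by (intro exI[of _ y1']) auto
    then have Pk0: "Pk (LEAST k. Pk k)" by (rule LeastI)
    define k0 where "k0 = (LEAST k. Pk k)"
    obtain y1 a0 where ya: "y1' \<le> y1" "y1 + k0 \<le> y2'" "a0 < n" "c \<le> S (w a0) y1 (y1 + k0)"
      using Pk0 unfolding Pk_def k0_def by blast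
    have k0pos: "k0 > 0"
    proof (rule ccontr)
      assume "\<not> k0 > 0"
      then have "k0 = 0" by simp
      then show False using ya(4) c0 by simp
    qed
    have minim: "S (w a) y1 (y1 + (k0 - 1)) < c" if "a < n" for a
    proof (rule ccontr)
      assume "\<not> S (w a) y1 (y1 + (k0 - 1)) < c"
      then have "Pk (k0 - 1)" unfolding Pk_def using ya that by (intro exI[of _ y1]) auto
      moreover have "k0 - 1 < k0" using k0pos by simp
      ultimately show False unfolding k0_def using not_less_Least by blast
    qed
    have k0m: "y1 + k0 \<le> m" using ya X(2) by simp
    have lt2c: "S (w a) y1 (y1 + k0) < 2 * c" if "a < n" for a
    proof -
      have "S (w a) y1 (y1 + k0) = S (w a) y1 (y1 + k0 - 1) + w a (y1 + k0 - 1)"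
        using S_last[of y1 "y1 + k0"] k0pos by simp
      moreover have "y1 + k0 - 1 = y1 + (k0 - 1)" using k0pos by simp
      moreover have "w a (y1 + k0 - 1) < c" unfolding w_def using small that rot_lt[OF m0] by blast
      ultimately show ?thesis using minim[OF that] by simp
    qed
    define s2 where "s2 = (s + (y1 + k0)) mod m"
    define D where "D = rot m s ` {y1..<y1 + k0}"
    have s2m: "s2 < m" unfolding s2_def using m0 by simp
    have lenm: "m - k0 < m" using k0pos k0m by simp
    have Deq: "D = rot m s2 ` {m - k0..<m}" unfolding D_def s2_def using rot_rerot k0m by simp
    have Dsub: "D \<subseteq> P1 i1 \<inter> P2 j1" unfolding D_def using X(6) ya by auto
    have valD: "val (U a) D = S (w a) y1 (y1 + k0)" for a unfolding D_def using Sv k0m by simp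
    define G where "G = Ns 1 \<union> Ns 2"
    define Gd where "Gd = G - {a0}"
    define Bd where "Bd = {..<n} - G - {a0}"
    have Gsub: "G \<subseteq> {..<n}" unfolding G_def using N1sub N2sub by auto
    have part1: "{..<n} - {a0} = Gd \<union> Bd" unfolding Gd_def Bd_def using Gsub by auto
    have part2: "Gd \<inter> Bd = {}" unfolding Gd_def Bd_def by auto
    have cardG: "card G = card (Ns 1) + card (Ns 2)" unfolding G_def
      using N12 N1sub N2sub by (intro card_Un_disjoint) (auto intro: finite_subset)
    have cnt: "2 * n \<le> t * card G" using count_types[OF t2 disj cover sizes] cardG by simp
    have fN: "finite (Ns 1)" "finite (Ns 2)" using N1sub N2sub finite_subset by blast+
    have cGB: "real (card Gd) + real (card Bd) = real n - 1"
    proof -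
      have "card (Gd \<union> Bd) = card Gd + card Bd"
        by (rule card_Un_disjoint) (use fN in \<open>auto simp: Gd_def Bd_def G_def\<close>)
      moreover have "card ({..<n} - {a0}) = n - 1" using ya(3) by simp
      ultimately have "card Gd + card Bd = n - 1" using part1 by simp
      then show ?thesis using n2 by (simp add: of_nat_diff flip: of_nat_add)
    qed
    have cB: "real (card Bd) \<le> real n - real (card G)"
    proof -
      have "card Bd \<le> card ({..<n} - G)" unfolding Bd_def by (intro card_mono) auto
      also have "card ({..<n} - G) = n - card G" using Gsub by (simp add: card_Diff_subset finite_subset)
      finally show ?thesis using Gsub card_mono[OF _ Gsub] by (simp add: of_nat_diff)
    qed
    have key: "c * (2 * real n - real (card G)) \<le> real n"
    proof -
      have h: "2 * real n \<le> real t * real (card G)" using cnt by (metis of_nat_le_iff of_nat_mult of_nat_numeral)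
      have "real t * (2 * real n - real (card G)) \<le> real n * (2 * real t - 2)"
        using h by (simp add: algebra_simps)
      then have "real t * (2 * real n - real (card G)) / (2 * real t - 2) \<le> real n"
        using den by (simp add: pos_divide_le_eq)
      then show ?thesis unfolding c_def by simp
    qed
    have acc: "c * (2 * real (card Bd) + real (card Gd) - 1) + 2 * c \<le> real n"
    proof -
      have "c * (2 * real (card Bd) + real (card Gd) - 1) + 2 * c = c * (real (card Bd) + real n)"
      proof -
        have nn: "real n = real (card Gd) + real (card Bd) + 1" using cGB by simp
        show ?thesis unfolding nn by (simp add: algebra_simps)
      qed
      also have "\<dots> \<le> c * (2 * real n - real (card G))"
        using cB c0 by (intro mult_left_mono) auto
      finally show ?thesis using key by simp
    qed
    show ?thesis
    proof (rule assemble[OF m0 s2m lenm n2 Deq ya(3) _ c0 nonneg part1 part2])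
      show "c \<le> val (U a0) D" using valD ya(4) by simp
      show "\<forall>g\<in>Gd. \<exists>Q (J::nat set). finite J \<and> n - 1 \<le> card J \<and>
          (\<forall>i\<in>J. is_bundle m (Q i) \<and> Q i \<inter> D = {} \<and> c \<le> val (U g) (Q i)) \<and>
          (\<forall>i\<in>J. \<forall>j\<in>J. i \<noteq> j \<longrightarrow> Q i \<inter> Q j = {})"
      proof
        fix g assume g: "g \<in> Gd"
        then have "g \<in> Ns 1 \<or> g \<in> Ns 2" unfolding Gd_def G_def by auto
        then show "\<exists>Q (J::nat set). finite J \<and> n - 1 \<le> card J \<and>
          (\<forall>i\<in>J. is_bundle m (Q i) \<and> Q i \<inter> D = {} \<and> c \<le> val (U g) (Q i)) \<and>
          (\<forall>i\<in>J. \<forall>j\<in>J. i \<noteq> j \<longrightarrow> Q i \<inter> Q j = {})"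
        proof
          assume g1: "g \<in> Ns 1"
          define J where "J = {..<n} - {i1}"
          have "finite J" "n - 1 \<le> card J" unfolding J_def using X(3) by auto
          moreover have "\<forall>ii\<in>J. is_bundle m (P1 ii) \<and> P1 ii \<inter> D = {} \<and> c \<le> val (U g) (P1 ii)"
          proof
            fix ii assume ii: "ii \<in> J"
            then have iin: "ii < n" "ii \<noteq> i1" unfolding J_def by auto
            have "is_bundle m (P1 ii)" using split1 iin unfolding is_split_def by blast
            moreover have "P1 ii \<inter> P1 i1 = {}" using split1 iin X(3) unfolding is_split_def by blast
            then have "P1 ii \<inter> D = {}" using Dsub by blast
            moreover have "c \<le> val (U g) (P1 ii)" using st1 g1 iin by blast
            ultimately show "is_bundle m (P1 ii) \<and> P1 ii \<inter> D = {} \<and> c \<le> val (U g) (P1 ii)" by blast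
          qed
          moreover have "\<forall>ii\<in>J. \<forall>jj\<in>J. ii \<noteq> jj \<longrightarrow> P1 ii \<inter> P1 jj = {}"
            using split1 unfolding J_def is_split_def by blast
          ultimately show ?thesis by blast
        next
          assume g2: "g \<in> Ns 2"
          define J where "J = {..<n} - {j1}"
          have "finite J" "n - 1 \<le> card J" unfolding J_def using X(4) by auto
          moreover have "\<forall>ii\<in>J. is_bundle m (P2 ii) \<and> P2 ii \<inter> D = {} \<and> c \<le> val (U g) (P2 ii)"
          proof
            fix ii assume ii: "ii \<in> J"
            then have iin: "ii < n" "ii \<noteq> j1" unfolding J_def by auto
            have "is_bundle m (P2 ii)" using split2 iin unfolding is_split_def by blast
            moreover have "P2 ii \<inter> P2 j1 = {}" using split2 iin X(4) unfolding is_split_def by blast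
            then have "P2 ii \<inter> D = {}" using Dsub by blast
            moreover have "c \<le> val (U g) (P2 ii)" using st2 g2 iin by blast
            ultimately show "is_bundle m (P2 ii) \<and> P2 ii \<inter> D = {} \<and> c \<le> val (U g) (P2 ii)" by blast
          qed
          moreover have "\<forall>ii\<in>J. \<forall>jj\<in>J. ii \<noteq> jj \<longrightarrow> P2 ii \<inter> P2 jj = {}"
            using split2 unfolding J_def is_split_def by blast
          ultimately show ?thesis by blast
        qed
      qed
      show "\<forall>b\<in>Bd. (\<forall>p<m. U b p < c) \<and>
          c * (2 * real (card Bd) + real (card Gd) - 1) \<le> val (U b) (rot m s2 ` {0..<m - k0})"
      proof
        fix b assume b: "b \<in> Bd"
        then have bn: "b < n" unfolding Bd_def by simp
        define w2 where "w2 = (\<lambda>p. U b (rot m s2 p))"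
        have "val (U b) {..<m} = S w2 0 m"
          using val_rot[of m m "U b" s2 0] rot_surj[OF m0, of s2] unfolding w2_def
          by (simp add: atLeast0LessThan)
        also have "\<dots> = S w2 0 (m - k0) + S w2 (m - k0) m" by (rule S_split) auto
        also have "S w2 0 (m - k0) = val (U b) (rot m s2 ` {0..<m - k0})"
          unfolding w2_def using val_rot[of "m - k0" m "U b" s2 0] by simp
        also have "S w2 (m - k0) m = val (U b) D"
          unfolding w2_def Deq using val_rot[of m m "U b" s2 "m - k0"] by simp
        finally have "val (U b) (rot m s2 ` {0..<m - k0}) = real n - val (U b) D" using tot[OF bn] by simp
        moreover have "val (U b) D < 2 * c" using valD lt2c[OF bn] by simp
        ultimately show "(\<forall>p<m. U b p < c) \<and>
          c * (2 * real (card Bd) + real (card Gd) - 1) \<le> val (U b) (rot m s2 ` {0..<m - k0})"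
          using small bn acc by auto
      qed
    qed
  qed
  then show ?thesis unfolding c_def .
qed


end
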